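(* (Principal specialization.) Let $0\le m\le n$, $x=(x_1,\dots,x_m)$, and let $y=(1,t,\dots,t^{n-1})$. Then \[F(t^{n-m+1};x,y;t)=\prod_{i=1}^m\frac{1-t^{i+n-m}}{1-t^nx_i}\quad\text{and}\quad F(1;x,y;t)=t^{\binom m2}x_1\cdots x_m\prod_{i=1}^m\frac{1-t^{i+n-m}}{1-t^nx_i}.\]
   Context: For $x=(x_1,\dots,x_m)$, $y=(y_1,\dots,y_n)$, \[F(u;x,y;t)=\sum_{I\subseteq\{1,\dots,m\}}(-u)^{|I|}t^{\binom{|I|}{2}}\prod_{i\in I,\ j\in\{1,\dots,m\}\setminus I}\frac{tx_i-x_j}{x_i-x_j}\prod_{i\in I}\prod_{j=1}^n\frac{1-x_iy_j}{1-tx_iy_j}.\] *)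

theory Defs
  imports Main
begin

definition F :: "'a::field \<Rightarrow> nat \<Rightarrow> (nat \<Rightarrow> 'a) \<Rightarrow> nat \<Rightarrow> (nat \<Rightarrow> 'a) \<Rightarrow> 'a \<Rightarrow> 'a" where
  "F u m x n y t =
     (\<Sum>I\<in>Pow {1..m}. (- u) ^ card I * t ^ (card I choose 2)
        * (\<Prod>i\<in>I. \<Prod>j\<in>{1..m} - I. (t * x i - x j) / (x i - x j))
        * (\<Prod>i\<in>I. \<Prod>j\<in>{1..n}. (1 - x i * y j) / (1 - t * x i * y j)))"

end

theory Submission
  imports Defs "HOL-Computational_Algebra.Polynomial"
begin


definition Aw :: "nat set \<Rightarrow> nat set \<Rightarrow> (nat \<Rightarrow> 'a::field) \<Rightarrow> 'a \<Rightarrow> 'a" where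
  "Aw S I x t = (\<Prod>i\<in>I. \<Prod>j\<in>S - I. (t * x i - x j) / (x i - x j))"

definition wt :: "'a::field \<Rightarrow> 'a \<Rightarrow> nat set \<Rightarrow> nat set \<Rightarrow> (nat \<Rightarrow> 'a) \<Rightarrow> 'a \<Rightarrow> 'a" where
  "wt u q S I x t = (- u) ^ card I * t ^ (card I choose 2) * Aw S I x t
     * (\<Prod>i\<in>I. 1 - x i) * (\<Prod>i\<in>S - I. 1 - q * x i)"

definition LL :: "'a::field \<Rightarrow> 'a \<Rightarrow> nat set \<Rightarrow> (nat \<Rightarrow> 'a) \<Rightarrow> 'a \<Rightarrow> 'a" where
  "LL u q S x t = (\<Sum>I\<in>Pow S. wt u q S I x t)"

lemma wt_out:
  assumes "finite S" "k \<notin> S" "J \<subseteq> S"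
  shows "wt u q (insert k S) J x t = wt u q S J x t
     * (\<Prod>i\<in>J. (t * x i - x k) / (x i - x k)) * (1 - q * x k)"
proof -
  have e: "insert k S - J = insert k (S - J)" using assms by auto
  have fJ: "finite J" using assms finite_subset by blast
  have "Aw (insert k S) J x t = Aw S J x t * (\<Prod>i\<in>J. (t * x i - x k) / (x i - x k))"
  proof -
    have "(\<Prod>i\<in>J. \<Prod>j\<in>insert k (S - J). (t * x i - x j) / (x i - x j))
       = (\<Prod>i\<in>J. ((t * x i - x k) / (x i - x k)) * (\<Prod>j\<in>S - J. (t * x i - x j) / (x i - x j)))"
      using assms by (intro prod.cong refl) simp
    also have "\<dots> = (\<Prod>i\<in>J. (t * x i - x k) / (x i - x k)) * (\<Prod>i\<in>J. \<Prod>j\<in>S - J. (t * x i - x j) / (x i - x j))"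
      by (rule prod.distrib)
    finally show ?thesis unfolding Aw_def e by (simp only: mult.commute)
  qed
  moreover have "(\<Prod>i\<in>insert k S - J. 1 - q * x i) = (1 - q * x k) * (\<Prod>i\<in>S - J. 1 - q * x i)"
    unfolding e using assms by simp
  ultimately show ?thesis unfolding wt_def by (simp add: ac_simps)
qed

lemma wt_in:
  assumes "finite S" "k \<notin> S" "J \<subseteq> S"
  shows "wt u q (insert k S) (insert k J) x t = wt u q S J x t
     * (- u) * t ^ card J * (\<Prod>j\<in>S - J. (t * x k - x j) / (x k - x j)) * (1 - x k)"
proof -
  have e: "insert k S - insert k J = S - J" using assms by auto
  have fJ: "finite J" using assms finite_subset by blast
  have kJ: "k \<notin> J" using assms by auto
  have c: "card (insert k J) = Suc (card J)" using fJ kJ by simp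
  have ch: "Suc (card J) choose 2 = (card J choose 2) + card J"
    by (cases "card J") (auto simp: choose_two)
  have "Aw (insert k S) (insert k J) x t = (\<Prod>j\<in>S - J. (t * x k - x j) / (x k - x j)) * Aw S J x t"
    unfolding Aw_def e using fJ kJ by simp
  moreover have "(\<Prod>i\<in>insert k J. 1 - x i) = (1 - x k) * (\<Prod>i\<in>J. 1 - x i)"
    using fJ kJ by simp
  ultimately show ?thesis unfolding wt_def e c ch by (simp add: ac_simps power_add)
qed

lemma wt_cong:
  assumes "k \<notin> S" "J \<subseteq> S"
  shows "wt u q S J (x(k:=z)) t = wt u q S J x t"
proof -
  have "\<And>i. i \<in> S \<Longrightarrow> (x(k:=z)) i = x i" using assms by auto
  then show ?thesis unfolding wt_def Aw_def using assms
    by (intro arg_cong2[where f="(*)"] prod.cong refl) auto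
qed

lemma LL_split:
  assumes "finite S" "k \<notin> S"
  shows "LL u q (insert k S) x t = (\<Sum>J\<in>Pow S. wt u q S J x t *
     ((\<Prod>i\<in>J. (t * x i - x k) / (x i - x k)) * (1 - q * x k)
      + (- u) * t ^ card J * (\<Prod>j\<in>S - J. (t * x k - x j) / (x k - x j)) * (1 - x k)))"
proof -
  have d: "Pow S \<inter> insert k ` Pow S = {}" using assms by auto
  have inj: "inj_on (insert k) (Pow S)"
  proof (rule inj_onI)
    fix A B assume "A \<in> Pow S" "B \<in> Pow S" "insert k A = insert k B"
    then have "insert k A - {k} = insert k B - {k}" "k \<notin> A" "k \<notin> B" using assms by auto
    then show "A = B" by simp
  qed
  have "LL u q (insert k S) x t = (\<Sum>J\<in>Pow S. wt u q (insert k S) J x t)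
        + (\<Sum>J\<in>insert k ` Pow S. wt u q (insert k S) J x t)"
    unfolding LL_def Pow_insert using assms d by (simp add: sum.union_disjoint)
  also have "(\<Sum>J\<in>insert k ` Pow S. wt u q (insert k S) J x t)
     = (\<Sum>J\<in>Pow S. wt u q (insert k S) (insert k J) x t)"
    using inj by (simp add: sum.reindex)
  finally have "LL u q (insert k S) x t = (\<Sum>J\<in>Pow S. wt u q (insert k S) J x t + wt u q (insert k S) (insert k J) x t)"
    by (simp add: sum.distrib)
  also have "\<dots> = (\<Sum>J\<in>Pow S. wt u q S J x t *
     ((\<Prod>i\<in>J. (t * x i - x k) / (x i - x k)) * (1 - q * x k)
      + (- u) * t ^ card J * (\<Prod>j\<in>S - J. (t * x k - x j) / (x k - x j)) * (1 - x k)))"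
    using assms by (intro sum.cong refl) (simp add: wt_in wt_out algebra_simps)
  finally show ?thesis .
qed

lemma coeff_mult_le:
  fixes p q :: "'a::comm_ring_1 poly"
  assumes "degree p \<le> a" "degree q \<le> b"
  shows "coeff (p*q) (a+b) = coeff p a * coeff q b"
proof -
  have "coeff (p*q) (a+b) = (\<Sum>i\<in>{a}. coeff p i * coeff q (a+b-i))"
    unfolding coeff_mult
  proof (rule sum.mono_neutral_right)
    show "\<forall>i\<in>{..a + b} - {a}. coeff p i * coeff q (a + b - i) = 0"
    proof
      fix i assume "i \<in> {..a + b} - {a}"
      then have "i < a \<or> i > a" by auto
      then show "coeff p i * coeff q (a + b - i) = 0"
        using assms by (auto simp: coeff_eq_0)
    qed
  qed auto
  then show ?thesis by simp
qed

lemma prod_lin: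
  fixes f :: "'b \<Rightarrow> 'a::comm_ring_1 poly"
  assumes "finite A" "\<forall>a\<in>A. degree (f a) \<le> 1"
  shows "degree (prod f A) \<le> card A \<and> coeff (prod f A) (card A) = (\<Prod>a\<in>A. coeff (f a) 1)"
  using assms
proof (induction A rule: finite_induct)
  case empty
  then show ?case by simp
next
  case (insert a A)
  then have d: "degree (f a) \<le> 1" and IH: "degree (prod f A) \<le> card A"
      "coeff (prod f A) (card A) = (\<Prod>a\<in>A. coeff (f a) 1)" by auto
  have "degree (f a * prod f A) \<le> 1 + card A"
    using d IH(1) degree_mult_le[of "f a" "prod f A"] by linarith
  moreover have "coeff (f a * prod f A) (1 + card A) = coeff (f a) 1 * coeff (prod f A) (card A)"
    by (rule coeff_mult_le[OF d IH(1)])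
  ultimately show ?case using insert by simp
qed

lemma mult3_deg:
  fixes p q r :: "'a::comm_ring_1 poly"
  assumes "degree p \<le> a" "degree q \<le> b" "degree r \<le> 1"
  shows "degree (p * q * r) \<le> a + b + 1 \<and> coeff (p * q * r) (a + b + 1) = coeff p a * coeff q b * coeff r 1"
proof -
  have d: "degree (p * q) \<le> a + b" using assms degree_mult_le[of p q] by linarith
  have "degree (p * q * r) \<le> a + b + 1" using d assms degree_mult_le[of "p*q" r] by linarith
  moreover have "coeff (p * q * r) (a + b + 1) = coeff (p*q) (a+b) * coeff r 1"
    by (rule coeff_mult_le[OF d assms(3)])
  ultimately show ?thesis using coeff_mult_le[OF assms(1,2)] by simp
qed

lemma sum_Pow_insert:
  assumes "finite S" "k \<notin> S"
  shows "(\<Sum>J\<in>Pow (insert k S). f J) = (\<Sum>J\<in>Pow S. f J + f (insert k J))"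
proof -
  have d: "Pow S \<inter> insert k ` Pow S = {}" using assms by auto
  have inj: "inj_on (insert k) (Pow S)"
  proof (rule inj_onI)
    fix A B assume "A \<in> Pow S" "B \<in> Pow S" "insert k A = insert k B"
    then have "insert k A - {k} = insert k B - {k}" "k \<notin> A" "k \<notin> B" using assms by auto
    then show "A = B" by simp
  qed
  have "(\<Sum>J\<in>Pow (insert k S). f J) = (\<Sum>J\<in>Pow S. f J) + (\<Sum>J\<in>insert k ` Pow S. f J)"
    unfolding Pow_insert using assms d by (simp add: sum.union_disjoint)
  also have "(\<Sum>J\<in>insert k ` Pow S. f J) = (\<Sum>J\<in>Pow S. f (insert k J))"
    using inj by (simp add: sum.reindex)
  finally show ?thesis by (simp add: sum.distrib)
qed

lemma LL_zero:
  assumes "finite S" "k \<notin> S" "\<forall>j\<in>S. x j \<noteq> 0" "x k = 0"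
  shows "LL u q (insert k S) x t = (1 - u) * LL (u * t) q S x t"
proof -
  have "LL u q (insert k S) x t = (\<Sum>J\<in>Pow S. (1 - u) * wt (u * t) q S J x t)"
    unfolding LL_split[OF assms(1,2)]
  proof (intro sum.cong refl)
    fix J assume J: "J \<in> Pow S"
    have fJ: "finite J" using J assms(1) finite_subset by auto
    have p1: "(\<Prod>i\<in>J. (t * x i - x k) / (x i - x k)) = t ^ card J"
      using J assms by (simp add: subset_iff)
    have p2: "(\<Prod>j\<in>S - J. (t * x k - x j) / (x k - x j)) = 1"
      using J assms by (intro prod.neutral) auto
    have w: "wt (u * t) q S J x t = wt u q S J x t * t ^ card J"
    proof -
      have "(- (u * t)) ^ card J = (- u) ^ card J * t ^ card J"
        by (metis mult_minus_left power_mult_distrib)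
      then show ?thesis unfolding wt_def by (simp add: ac_simps)
    qed
    show "wt u q S J x t * ((\<Prod>i\<in>J. (t * x i - x k) / (x i - x k)) * (1 - q * x k)
      + (- u) * t ^ card J * (\<Prod>j\<in>S - J. (t * x k - x j) / (x k - x j)) * (1 - x k))
      = (1 - u) * wt (u * t) q S J x t"
      unfolding p1 p2 w using assms by (simp add: algebra_simps)
  qed
  then show ?thesis unfolding LL_def by (simp add: sum_distrib_left)
qed

definition Vp :: "nat set \<Rightarrow> (nat \<Rightarrow> 'a::field) \<Rightarrow> 'a poly" where
  "Vp S x = (\<Prod>j\<in>S. [:- x j, 1:])"

definition E1p :: "'a::field \<Rightarrow> 'a \<Rightarrow> nat set \<Rightarrow> nat set \<Rightarrow> (nat \<Rightarrow> 'a) \<Rightarrow> 'a poly" where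
  "E1p t q S J x = (\<Prod>i\<in>J. [:- (t * x i), 1:]) * (\<Prod>j\<in>S - J. [:- x j, 1:]) * [:1, - q:]"

definition E2p :: "'a::field \<Rightarrow> 'a \<Rightarrow> nat set \<Rightarrow> nat set \<Rightarrow> (nat \<Rightarrow> 'a) \<Rightarrow> 'a poly" where
  "E2p u t S J x = smult (- u * t ^ card J) ((\<Prod>j\<in>S - J. [:- x j, t:]) * (\<Prod>i\<in>J. [:- x i, 1:]) * [:1, - 1:])"

definition Np :: "'a::field \<Rightarrow> 'a \<Rightarrow> nat set \<Rightarrow> (nat \<Rightarrow> 'a) \<Rightarrow> 'a \<Rightarrow> 'a poly" where
  "Np u q S x t = (\<Sum>J\<in>Pow S. smult (wt u q S J x t) (E1p t q S J x + E2p u t S J x))"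

lemma card_split:
  assumes "finite S" "J \<subseteq> S"
  shows "card J + card (S - J) = card S"
  using assms by (metis card_Diff_subset card_mono finite_subset le_add_diff_inverse)

lemma Vp_deg:
  assumes "finite S"
  shows "degree (Vp S x) \<le> card S \<and> coeff (Vp S x) (card S) = 1"
  using prod_lin[OF assms, of "\<lambda>j. [:- x j, 1:]"] unfolding Vp_def by simp

lemma E1p_deg:
  assumes "finite S" "J \<subseteq> S"
  shows "degree (E1p t q S J x) \<le> card S + 1 \<and> coeff (E1p t q S J x) (card S + 1) = - q"
proof -
  have fJ: "finite J" using assms finite_subset by auto
  have a: "degree (\<Prod>i\<in>J. [:- (t * x i), 1:]) \<le> card J \<and> coeff (\<Prod>i\<in>J. [:- (t * x i), 1:]) (card J) = 1"
    using prod_lin[OF fJ, of "\<lambda>i. [:- (t * x i), 1:]"] by simp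
  have b: "degree (\<Prod>j\<in>S - J. [:- x j, 1:]) \<le> card (S - J) \<and> coeff (\<Prod>j\<in>S - J. [:- x j, 1:]) (card (S - J)) = 1"
    using prod_lin[of "S - J" "\<lambda>j. [:- x j, 1:]"] assms by simp
  have c: "degree [:1, - q:] \<le> 1" by simp
  show ?thesis using mult3_deg[OF a[THEN conjunct1] b[THEN conjunct1] c] a b card_split[OF assms]
    unfolding E1p_def by simp
qed

lemma E2p_deg:
  assumes "finite S" "J \<subseteq> S"
  shows "degree (E2p u t S J x) \<le> card S + 1 \<and> coeff (E2p u t S J x) (card S + 1) = u * t ^ card S"
proof -
  have fJ: "finite J" using assms finite_subset by auto
  have a: "degree (\<Prod>j\<in>S - J. [:- x j, t:]) \<le> card (S - J) \<and> coeff (\<Prod>j\<in>S - J. [:- x j, t:]) (card (S - J)) = t ^ card (S - J)"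
    using prod_lin[of "S - J" "\<lambda>j. [:- x j, t:]"] assms by simp
  have b: "degree (\<Prod>i\<in>J. [:- x i, 1:]) \<le> card J \<and> coeff (\<Prod>i\<in>J. [:- x i, 1:]) (card J) = 1"
    using prod_lin[OF fJ, of "\<lambda>i. [:- x i, 1:]"] by simp
  have c: "degree [:1, - 1:] \<le> 1" by simp
  have e: "card (S - J) + card J = card S" using card_split[OF assms] by simp
  have "degree ((\<Prod>j\<in>S - J. [:- x j, t:]) * (\<Prod>i\<in>J. [:- x i, 1:]) * [:1, - 1:]) \<le> card S + 1
    \<and> coeff ((\<Prod>j\<in>S - J. [:- x j, t:]) * (\<Prod>i\<in>J. [:- x i, 1:]) * [:1, - 1:]) (card S + 1) = - (t ^ card (S - J))"
    using mult3_deg[OF a[THEN conjunct1] b[THEN conjunct1] c] a b e by simp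
  moreover have "- u * t ^ card J * - (t ^ card (S - J)) = u * t ^ card S"
    using e by (metis mult.assoc minus_mult_minus power_add mult.commute)
  ultimately show ?thesis unfolding E2p_def using degree_smult_le order_trans by (auto intro: order_trans[OF degree_smult_le])
qed

lemma Np_deg:
  assumes "finite S"
  shows "degree (Np u q S x t) \<le> card S + 1 \<and> coeff (Np u q S x t) (card S + 1) = (u * t ^ card S - q) * LL u q S x t"
proof
  have fP: "finite (Pow S)" using assms by simp
  show "degree (Np u q S x t) \<le> card S + 1"
    unfolding Np_def
  proof (rule degree_sum_le[OF fP])
    fix J assume "J \<in> Pow S"
    then have J: "J \<subseteq> S" by simp
    have "degree (E1p t q S J x) \<le> card S + 1" using E1p_deg[OF assms J, of t q x] by simp
    moreover have "degree (E2p u t S J x) \<le> card S + 1" using E2p_deg[OF assms J, of u t x] by simp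
    ultimately have "degree (E1p t q S J x + E2p u t S J x) \<le> card S + 1"
      by (rule degree_add_le)
    then show "degree (smult (wt u q S J x t) (E1p t q S J x + E2p u t S J x)) \<le> card S + 1"
      by (rule order_trans[OF degree_smult_le])
  qed
  show "coeff (Np u q S x t) (card S + 1) = (u * t ^ card S - q) * LL u q S x t"
    unfolding Np_def LL_def coeff_sum sum_distrib_left
  proof (rule sum.cong[OF refl])
    fix J assume "J \<in> Pow S"
    then have J: "J \<subseteq> S" by simp
    have "coeff (E1p t q S J x) (card S + 1) = - q" using E1p_deg[OF assms J, of t q x] by simp
    moreover have "coeff (E2p u t S J x) (card S + 1) = u * t ^ card S" using E2p_deg[OF assms J, of u t x] by simp
    ultimately show "coeff (smult (wt u q S J x t) (E1p t q S J x + E2p u t S J x)) (card S + 1) =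
         (u * t ^ card S - q) * wt u q S J x t"
      by (simp add: algebra_simps)
  qed
qed

lemma Vp_split:
  assumes "finite S" "J \<subseteq> S"
  shows "poly (Vp S x) z = (\<Prod>i\<in>J. z - x i) * (\<Prod>j\<in>S - J. z - x j)"
proof -
  have "poly (Vp S x) z = (\<Prod>j\<in>S. z - x j)" unfolding Vp_def poly_prod by simp
  also have "\<dots> = (\<Prod>j\<in>S - J. z - x j) * (\<Prod>i\<in>J. z - x i)"
    by (rule prod.subset_diff[OF assms(2,1)])
  finally show ?thesis by simp
qed

lemma E1_eval:
  assumes "finite S" "J \<subseteq> S" "z \<notin> x ` S"
  shows "poly (E1p t q S J x) z = poly (Vp S x) z * ((\<Prod>i\<in>J. (t * x i - z) / (x i - z)) * (1 - q * z))"
proof -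
  have "(\<Prod>i\<in>J. z - x i) * (\<Prod>i\<in>J. (t * x i - z) / (x i - z)) = (\<Prod>i\<in>J. (z - x i) * ((t * x i - z) / (x i - z)))"
    by (rule prod.distrib[symmetric])
  also have "\<dots> = (\<Prod>i\<in>J. z - t * x i)"
  proof (rule prod.cong[OF refl])
    fix i assume "i \<in> J"
    then have "x i - z \<noteq> 0" using assms by auto
    then show "(z - x i) * ((t * x i - z) / (x i - z)) = z - t * x i"
      by (simp add: field_simps)
  qed
  finally have e: "(\<Prod>i\<in>J. z - x i) * (\<Prod>i\<in>J. (t * x i - z) / (x i - z)) = (\<Prod>i\<in>J. z - t * x i)" .
  show ?thesis unfolding Vp_split[OF assms(1,2)] E1p_def poly_mult poly_prod
    using e by (simp add: ac_simps)
qed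

lemma E2_eval:
  assumes "finite S" "J \<subseteq> S" "z \<notin> x ` S"
  shows "poly (E2p u t S J x) z = poly (Vp S x) z * ((- u) * t ^ card J * (\<Prod>j\<in>S - J. (t * z - x j) / (z - x j)) * (1 - z))"
proof -
  have "(\<Prod>j\<in>S - J. z - x j) * (\<Prod>j\<in>S - J. (t * z - x j) / (z - x j)) = (\<Prod>j\<in>S - J. (z - x j) * ((t * z - x j) / (z - x j)))"
    by (rule prod.distrib[symmetric])
  also have "\<dots> = (\<Prod>j\<in>S - J. t * z - x j)"
  proof (rule prod.cong[OF refl])
    fix j assume "j \<in> S - J"
    then have "z - x j \<noteq> 0" using assms by auto
    then show "(z - x j) * ((t * z - x j) / (z - x j)) = t * z - x j"
      by (simp add: field_simps)
  qed
  finally have e: "(\<Prod>j\<in>S - J. z - x j) * (\<Prod>j\<in>S - J. (t * z - x j) / (z - x j)) = (\<Prod>j\<in>S - J. t * z - x j)" .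
  show ?thesis unfolding Vp_split[OF assms(1,2)] E2p_def poly_mult poly_prod poly_smult
    using e by (simp add: ac_simps)
qed

lemma Np_eval:
  assumes "finite S" "k \<notin> S" "z \<notin> x ` S"
  shows "poly (Np u q S x t) z = poly (Vp S x) z * LL u q (insert k S) (x(k:=z)) t"
proof -
  have "LL u q (insert k S) (x(k:=z)) t = (\<Sum>J\<in>Pow S. wt u q S J x t *
     ((\<Prod>i\<in>J. (t * x i - z) / (x i - z)) * (1 - q * z)
      + (- u) * t ^ card J * (\<Prod>j\<in>S - J. (t * z - x j) / (z - x j)) * (1 - z)))"
    unfolding LL_split[OF assms(1,2)]
  proof (rule sum.cong[OF refl])
    fix J assume J: "J \<in> Pow S"
    have a: "(\<Prod>i\<in>J. (t * (x(k:=z)) i - z) / ((x(k:=z)) i - z))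
       = (\<Prod>i\<in>J. (t * x i - z) / (x i - z))"
      using J assms by (intro prod.cong refl) auto
    have b: "(\<Prod>j\<in>S - J. (t * z - (x(k:=z)) j) / (z - (x(k:=z)) j))
       = (\<Prod>j\<in>S - J. (t * z - x j) / (z - x j))"
      using J assms by (intro prod.cong refl) auto
    have w: "wt u q S J (x(k:=z)) t = wt u q S J x t" using J by (intro wt_cong assms(2)) simp
    show "wt u q S J (x(k := z)) t *
         ((\<Prod>i\<in>J. (t * (x(k:=z)) i - (x(k:=z)) k) / ((x(k:=z)) i - (x(k:=z)) k)) * (1 - q * (x(k:=z)) k) +
          - u * t ^ card J * (\<Prod>j\<in>S - J. (t * (x(k:=z)) k - (x(k:=z)) j) / ((x(k:=z)) k - (x(k:=z)) j)) * (1 - (x(k:=z)) k)) =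
         wt u q S J x t *
         ((\<Prod>i\<in>J. (t * x i - z) / (x i - z)) * (1 - q * z) +
          - u * t ^ card J * (\<Prod>j\<in>S - J. (t * z - x j) / (z - x j)) * (1 - z))"
      unfolding w fun_upd_same unfolding a b by (rule refl)
  qed
  note e = this
  show ?thesis
    unfolding Np_def poly_sum poly_smult poly_add e sum_distrib_left
  proof (rule sum.cong[OF refl])
    fix J assume "J \<in> Pow S"
    then have J: "J \<subseteq> S" by simp
    show "wt u q S J x t * (poly (E1p t q S J x) z + poly (E2p u t S J x) z) =
         poly (Vp S x) z * (wt u q S J x t *
         ((\<Prod>i\<in>J. (t * x i - z) / (x i - z)) * (1 - q * z) +
          - u * t ^ card J * (\<Prod>j\<in>S - J. (t * z - x j) / (z - x j)) * (1 - z)))"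
      unfolding E1_eval[OF assms(1) J assms(3)] E2_eval[OF assms(1) J assms(3)]
      by (simp add: algebra_simps)
  qed
qed

lemma E1_poly:
  "poly (E1p t q S J x) z = (\<Prod>i\<in>J. z - t * x i) * (\<Prod>j\<in>S - J. z - x j) * (1 - q * z)"
  unfolding E1p_def poly_mult poly_prod by simp

lemma E2_poly:
  "poly (E2p u t S J x) z = (- u * t ^ card J) * ((\<Prod>j\<in>S - J. t * z - x j) * (\<Prod>i\<in>J. z - x i) * (1 - z))"
  unfolding E2p_def poly_smult poly_mult poly_prod by (simp add: ac_simps)

lemma abstract_cancel:
  fixes W R1 Q1 PA R2 Q2 PB c d e a b :: "'a::comm_ring_1"
  assumes "R1 * Q1 = PA" "R2 * Q2 = PB"
  shows "(W * R1 * c) * (d * ((a - b) * PB * Q1 * e)) + (W * d * R2 * e) * ((b - a) * PA * Q2 * c) = 0"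
  unfolding assms[symmetric] by (simp add: algebra_simps)

lemma Np_root:
  assumes "finite S" "j \<in> S" "inj_on x S"
  shows "poly (Np u q S x t) (x j) = 0"
proof -
  define S2 where "S2 = S - {j}"
  have S: "S = insert j S2" and fS2: "finite S2" and jS2: "j \<notin> S2"
    using assms unfolding S2_def by auto
  have neq: "\<And>l. l \<in> S2 \<Longrightarrow> x l \<noteq> x j"
    using assms unfolding S2_def inj_on_def by auto
  have "poly (Np u q S x t) (x j) = (\<Sum>J\<in>Pow S. wt u q S J x t * (poly (E1p t q S J x) (x j) + poly (E2p u t S J x) (x j)))"
    unfolding Np_def poly_sum poly_smult poly_add by simp
  also have "\<dots> = (\<Sum>K\<in>Pow S2. 0)"
    unfolding S sum_Pow_insert[OF fS2 jS2]
  proof (rule sum.cong[OF refl])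
    fix K assume "K \<in> Pow S2"
    then have K: "K \<subseteq> S2" by simp
    have fK: "finite K" using K fS2 finite_subset by auto
    have jK: "j \<notin> K" using K jS2 by auto
    have d1: "insert j S2 - K = insert j (S2 - K)" using jK by auto
    have d2: "insert j S2 - insert j K = S2 - K" using jS2 by auto
    have z1: "poly (E1p t q (insert j S2) K x) (x j) = 0"
      unfolding E1_poly d1 using fS2 by simp
    have z2: "poly (E2p u t (insert j S2) (insert j K) x) (x j) = 0"
      unfolding E2_poly using fK jK by simp
    have p1: "poly (E2p u t (insert j S2) K x) (x j) = (- u * t ^ card K) *
        ((t * x j - x j) * (\<Prod>l\<in>S2 - K. t * x j - x l) * (\<Prod>i\<in>K. x j - x i) * (1 - x j))"
      unfolding E2_poly d1 using fS2 jS2 by (simp add: ac_simps)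
    have p2: "poly (E1p t q (insert j S2) (insert j K) x) (x j) =
        (x j - t * x j) * (\<Prod>i\<in>K. x j - t * x i) * (\<Prod>l\<in>S2 - K. x j - x l) * (1 - q * x j)"
      unfolding E1_poly d2 using fK jK by (simp add: ac_simps)
    have F1: "(\<Prod>i\<in>K. (t * x i - x j) / (x i - x j)) * (\<Prod>i\<in>K. x j - x i) = (\<Prod>i\<in>K. x j - t * x i)"
    proof -
      have "(\<Prod>i\<in>K. (t * x i - x j) / (x i - x j)) * (\<Prod>i\<in>K. x j - x i)
          = (\<Prod>i\<in>K. (t * x i - x j) / (x i - x j) * (x j - x i))"
        by (rule prod.distrib[symmetric])
      also have "\<dots> = (\<Prod>i\<in>K. x j - t * x i)"
      proof (rule prod.cong[OF refl])
        fix i assume "i \<in> K"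
        then have "x i - x j \<noteq> 0" using neq K by auto
        then show "(t * x i - x j) / (x i - x j) * (x j - x i) = x j - t * x i"
          by (simp add: field_simps)
      qed
      finally show ?thesis .
    qed
    have F2: "(\<Prod>l\<in>S2 - K. (t * x j - x l) / (x j - x l)) * (\<Prod>l\<in>S2 - K. x j - x l) = (\<Prod>l\<in>S2 - K. t * x j - x l)"
    proof -
      have "(\<Prod>l\<in>S2 - K. (t * x j - x l) / (x j - x l)) * (\<Prod>l\<in>S2 - K. x j - x l)
          = (\<Prod>l\<in>S2 - K. (t * x j - x l) / (x j - x l) * (x j - x l))"
        by (rule prod.distrib[symmetric])
      also have "\<dots> = (\<Prod>l\<in>S2 - K. t * x j - x l)"
      proof (rule prod.cong[OF refl])
        fix l assume "l \<in> S2 - K"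
        then have "x l \<noteq> x j" using neq by blast
        then have "x j - x l \<noteq> 0" by simp
        then show "(t * x j - x l) / (x j - x l) * (x j - x l) = t * x j - x l"
          by (simp add: field_simps)
      qed
      finally show ?thesis .
    qed
    have w1: "wt u q (insert j S2) K x t = wt u q S2 K x t * (\<Prod>i\<in>K. (t * x i - x j) / (x i - x j)) * (1 - q * x j)"
      by (rule wt_out[OF fS2 jS2 K])
    have w2: "wt u q (insert j S2) (insert j K) x t = wt u q S2 K x t * (- u) * t ^ card K
        * (\<Prod>l\<in>S2 - K. (t * x j - x l) / (x j - x l)) * (1 - x j)"
      by (rule wt_in[OF fS2 jS2 K])
    show "wt u q (insert j S2) K x t * (poly (E1p t q (insert j S2) K x) (x j) + poly (E2p u t (insert j S2) K x) (x j)) +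
          wt u q (insert j S2) (insert j K) x t * (poly (E1p t q (insert j S2) (insert j K) x) (x j) + poly (E2p u t (insert j S2) (insert j K) x) (x j))
          = 0"
      unfolding z1 z2 p1 p2 w1 w2 add_0_left add_0_right
      using abstract_cancel[OF F1 F2, where W="wt u q S2 K x t" and c="1 - q * x j" and d="- u * t ^ card K" and e="1 - x j" and a="t * x j" and b="x j"]
      by (simp add: ac_simps)
  qed
  also have "\<dots> = 0" by simp
  finally show ?thesis .
qed

lemma LL_cong:
  assumes "k \<notin> S"
  shows "LL u q S (x(k:=z)) t = LL u q S x t"
  unfolding LL_def using assms by (intro sum.cong refl wt_cong) auto

lemma Vp_root:
  assumes "finite S" "j \<in> S"
  shows "poly (Vp S x) (x j) = 0"
  unfolding Vp_def poly_prod using assms by (auto simp: prod_zero_iff)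

lemma Vp_nonzero:
  assumes "finite S" "z \<notin> x ` S"
  shows "poly (Vp S x) z \<noteq> 0"
  unfolding Vp_def poly_prod using assms by (auto simp: prod_zero_iff)

lemma key:
  assumes fS: "finite S" and kS: "k \<notin> S" and inj: "inj_on x S" and n0: "0 \<notin> x ` S" and zS: "z \<notin> x ` S"
  shows "LL u q (insert k S) (x(k:=z)) t = (u * t ^ card S - q) * LL u q S x t * z + (1 - u) * LL (u * t) q S x t"
proof -
  define a where "a = (u * t ^ card S - q) * LL u q S x t"
  define b where "b = (1 - u) * LL (u * t) q S x t"
  define Q where "Q = Vp S x * [:b, a:]"
  have VD: "degree (Vp S x) \<le> card S" "coeff (Vp S x) (card S) = 1" using Vp_deg[OF fS] by auto
  have lin: "degree [:b, a:] \<le> 1" by simp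
  have NQ: "Np u q S x t = Q"
  proof (rule poly_eqI_degree_lead_coeff[where n="card S + 1" and A="insert 0 (x ` S)"])
    show "coeff (Np u q S x t) (card S + 1) = coeff Q (card S + 1)"
      using Np_deg[OF fS, of u q x t] coeff_mult_le[OF VD(1) lin] VD(2) unfolding Q_def a_def by simp
    have "card (insert 0 (x ` S)) = card S + 1"
      using n0 fS card_image[OF inj] by simp
    then show "card S + 1 \<le> card (insert 0 (x ` S))" by simp
    show "degree (Np u q S x t) \<le> card S + 1" using Np_deg[OF fS, of u q x t] by simp
    show "degree Q \<le> card S + 1" unfolding Q_def
      using degree_mult_le[of "Vp S x" "[:b, a:]"] VD(1) lin by linarith
    fix w assume "w \<in> insert 0 (x ` S)"
    then show "poly (Np u q S x t) w = poly Q w"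
    proof
      assume w: "w = 0"
      have "poly (Np u q S x t) 0 = poly (Vp S x) 0 * LL u q (insert k S) (x(k:=0)) t"
        by (rule Np_eval[OF fS kS n0])
      also have "LL u q (insert k S) (x(k:=0)) t = (1 - u) * LL (u * t) q S (x(k:=0)) t"
        by (rule LL_zero) (use fS kS n0 in auto)
      also have "LL (u * t) q S (x(k:=0)) t = LL (u * t) q S x t" by (rule LL_cong[OF kS])
      finally show ?thesis unfolding w Q_def b_def by simp
    next
      assume "w \<in> x ` S"
      then obtain j where j: "j \<in> S" "w = x j" by auto
      show ?thesis unfolding Q_def j(2) poly_mult Np_root[OF fS j(1) inj] Vp_root[OF fS j(1)] by simp
    qed
  qed
  have "poly (Vp S x) z * LL u q (insert k S) (x(k:=z)) t = poly (Vp S x) z * (a * z + b)"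
    unfolding Np_eval[OF fS kS zS, symmetric] NQ Q_def by (simp add: algebra_simps)
  then have "LL u q (insert k S) (x(k:=z)) t = a * z + b"
    using Vp_nonzero[OF fS zS] by simp
  then show ?thesis unfolding a_def b_def .
qed

lemma LL_empty: "LL u q {} x t = 1"
  unfolding LL_def wt_def Aw_def by (simp add: numeral_2_eq_2)

lemma LL_step:
  assumes fS: "finite S" and kS: "k \<in> S" and inj: "inj_on x S"
    and k0: "x k = 0 \<or> 0 \<notin> x ` (S - {k})"
  shows "LL u q S x t = (u * t ^ card (S - {k}) - q) * LL u q (S - {k}) x t * x k + (1 - u) * LL (u * t) q (S - {k}) x t"
proof -
  have ins: "insert k (S - {k}) = S" using kS by auto
  have f': "finite (S - {k})" using fS by simp
  have k': "k \<notin> S - {k}" by simp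
  have inj': "inj_on x (S - {k})" using inj by (rule inj_on_subset) auto
  have zS: "x k \<notin> x ` (S - {k})" using inj kS by (auto simp: inj_on_def)
  show ?thesis
  proof (cases "x k = 0")
    case True
    then have n0: "\<forall>j\<in>S - {k}. x j \<noteq> 0" using zS by auto
    have "LL u q S x t = (1 - u) * LL (u * t) q (S - {k}) x t"
      using LL_zero[OF f' k' n0 True, of u q t] unfolding ins .
    then show ?thesis using True by simp
  next
    case False
    then have n0: "0 \<notin> x ` (S - {k})" using k0 by simp
    have "LL u q S x t = LL u q (insert k (S - {k})) (x(k := x k)) t" unfolding ins by simp
    also have "\<dots> = (u * t ^ card (S - {k}) - q) * LL u q (S - {k}) x t * x k + (1 - u) * LL (u * t) q (S - {k}) x t"
      by (rule key[OF f' k' inj' n0 zS])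
    finally show ?thesis .
  qed
qed

lemma pick:
  assumes "finite S" "S \<noteq> {}" "inj_on x S"
  obtains k where "k \<in> S" "x k = 0 \<or> 0 \<notin> x ` (S - {k})"
proof (cases "\<exists>k\<in>S. x k = 0")
  case True
  then obtain k where k: "k \<in> S" "x k = 0" by blast
  show ?thesis by (rule that[OF k(1)]) (simp add: k(2))
next
  case False
  from assms(2) obtain k where k: "k \<in> S" by blast
  have "0 \<notin> x ` (S - {k})" using False by auto
  then show ?thesis by (intro that[OF k]) simp
qed

lemma claim1:
  assumes "finite S" "inj_on x S"
  shows "card S = 0 \<or> q = s * t ^ (card S - 1) \<Longrightarrow> LL s q S x t = (\<Prod>j<card S. 1 - s * t ^ j)"
  using assms
proof (induction "card S" arbitrary: S s)
  case 0
  then have "S = {}" by simp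
  then show ?case by (simp add: LL_empty)
next
  case (Suc n)
  have fin: "finite S" and inj: "inj_on x S" and dq: "card S = 0 \<or> q = s * t ^ (card S - 1)"
    using Suc.prems by auto
  then have ne: "S \<noteq> {}" using Suc.hyps(2) by auto
  obtain k where k: "k \<in> S" "x k = 0 \<or> 0 \<notin> x ` (S - {k})" using pick[OF fin ne inj] .
  have c: "card (S - {k}) = n" using Suc.hyps(2) k(1) fin by simp
  have cn: "card S - 1 = n" using Suc.hyps(2) by simp
  have q: "q = s * t ^ n" using dq Suc.hyps(2) cn by auto
  have inj': "inj_on x (S - {k})" using inj by (rule inj_on_subset) auto
  have f': "finite (S - {k})" using fin by simp
  have pre: "card (S - {k}) = 0 \<or> q = s * t * t ^ (card (S - {k}) - 1)"
  proof (cases n)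
    case 0
    then show ?thesis using c by simp
  next
    case (Suc m)
    then show ?thesis using q c by (simp add: mult.assoc)
  qed
  have IH0: "LL (s * t) q (S - {k}) x t = (\<Prod>j<card (S - {k}). 1 - s * t * t ^ j)"
    using Suc.hyps(1)[of "S - {k}" "s * t"] c pre f' inj' by simp
  have "LL s q S x t = (1 - s) * LL (s * t) q (S - {k}) x t"
    using LL_step[OF fin k(1) inj k(2), of s q t] c q by simp
  also have "\<dots> = (\<Prod>j<Suc n. 1 - s * t ^ j)"
    unfolding IH0 c prod.lessThan_Suc_shift by (simp add: ac_simps)
  finally show ?case using Suc.hyps(2) by simp
qed

lemma claim2:
  assumes "finite S" "inj_on x S"
  shows "LL 1 q S x t = (\<Prod>i\<in>S. x i) * (\<Prod>j<card S. t ^ j - q)"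
  using assms
proof (induction "card S" arbitrary: S)
  case 0
  then have "S = {}" by simp
  then show ?case by (simp add: LL_empty)
next
  case (Suc n)
  have fin: "finite S" and inj: "inj_on x S" using Suc.prems by auto
  then have ne: "S \<noteq> {}" using Suc.hyps(2) by auto
  obtain k where k: "k \<in> S" "x k = 0 \<or> 0 \<notin> x ` (S - {k})" using pick[OF fin ne inj] .
  have c: "card (S - {k}) = n" using Suc.hyps(2) k(1) fin by simp
  have inj': "inj_on x (S - {k})" using inj by (rule inj_on_subset) auto
  have f': "finite (S - {k})" using fin by simp
  have IH0: "LL 1 q (S - {k}) x t = (\<Prod>i\<in>S - {k}. x i) * (\<Prod>j<card (S - {k}). t ^ j - q)"
    by (rule Suc.hyps(1)[OF c[symmetric] f' inj'])
  have pS: "(\<Prod>i\<in>S. x i) = x k * (\<Prod>i\<in>S - {k}. x i)"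
    using fin k(1) by (rule prod.remove)
  have st: "LL 1 q S x t = (1 * t ^ card (S - {k}) - q) * LL 1 q (S - {k}) x t * x k + (1 - 1) * LL (1 * t) q (S - {k}) x t"
    by (rule LL_step[OF fin k(1) inj k(2)])
  have "LL 1 q S x t = (t ^ n - q) * ((\<Prod>i\<in>S - {k}. x i) * (\<Prod>j<n. t ^ j - q)) * x k"
    using st unfolding IH0 c by (simp only: mult_1_left diff_self mult_zero_left add_0_right)
  also have "\<dots> = (\<Prod>i\<in>S. x i) * (\<Prod>j<Suc n. t ^ j - q)"
    unfolding pS prod.lessThan_Suc by (simp only: mult.assoc mult.commute mult.left_commute)
  finally show ?case unfolding Suc.hyps(2)[symmetric] .
qed



lemma tele:
  fixes xi t :: "'a::field"
  assumes "\<forall>j\<in>{1..n}. 1 - t * xi * t ^ (j - 1) \<noteq> 0"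
  shows "(\<Prod>j\<in>{1..n}. (1 - xi * t ^ (j - 1)) / (1 - t * xi * t ^ (j - 1))) * (1 - t ^ n * xi) = 1 - xi"
  using assms
proof (induction n)
  case 0
  then show ?case by simp
next
  case (Suc n)
  have d: "1 - t * xi * t ^ n \<noteq> 0" using Suc.prems by (metis atLeastAtMost_iff diff_Suc_1 le_add1 plus_1_eq_Suc order_refl)
  have IH: "(\<Prod>j\<in>{1..n}. (1 - xi * t ^ (j - 1)) / (1 - t * xi * t ^ (j - 1))) * (1 - t ^ n * xi) = 1 - xi"
    using Suc.prems by (intro Suc.IH) auto
  have "(\<Prod>j\<in>{1..Suc n}. (1 - xi * t ^ (j - 1)) / (1 - t * xi * t ^ (j - 1)))
      = (\<Prod>j\<in>{1..n}. (1 - xi * t ^ (j - 1)) / (1 - t * xi * t ^ (j - 1))) * ((1 - xi * t ^ n) / (1 - t * xi * t ^ n))"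
    by (simp add: prod.cl_ivl_Suc)
  moreover have "t ^ Suc n * xi = t * xi * t ^ n" by (simp add: ac_simps)
  ultimately have "(\<Prod>j\<in>{1..Suc n}. (1 - xi * t ^ (j - 1)) / (1 - t * xi * t ^ (j - 1))) * (1 - t ^ Suc n * xi)
      = (\<Prod>j\<in>{1..n}. (1 - xi * t ^ (j - 1)) / (1 - t * xi * t ^ (j - 1))) * (1 - t ^ n * xi)"
    using d by (simp add: field_simps)
  then show ?case using IH by simp
qed

lemma F_LL:
  fixes x :: "nat \<Rightarrow> 'a::field"
  assumes D: "\<forall>i\<in>{1..m}. 1 - t ^ n * x i \<noteq> 0"
    and H: "\<forall>i\<in>{1..m}. \<forall>j\<in>{1..n}. 1 - t * x i * t ^ (j - 1) \<noteq> 0"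
  shows "F u m x n (\<lambda>j. t ^ (j - 1)) t * (\<Prod>i\<in>{1..m}. 1 - t ^ n * x i) = LL u (t ^ n) {1..m} x t"
proof -
  have inner: "(\<Prod>j\<in>{1..n}. (1 - x i * t ^ (j - 1)) / (1 - t * x i * t ^ (j - 1))) = (1 - x i) / (1 - t ^ n * x i)"
    if i: "i \<in> {1..m}" for i
    using tele[of n t "x i"] H D i by (simp add: field_simps)
  show ?thesis
    unfolding F_def LL_def sum_distrib_right
  proof (rule sum.cong[OF refl])
    fix I assume "I \<in> Pow {1..m}"
    then have I: "I \<subseteq> {1..m}" by simp
    have p1: "(\<Prod>i\<in>I. \<Prod>j\<in>{1..n}. (1 - x i * t ^ (j - 1)) / (1 - t * x i * t ^ (j - 1)))
        = (\<Prod>i\<in>I. (1 - x i) / (1 - t ^ n * x i))"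
      using I inner by (intro prod.cong refl) auto
    have p2: "(\<Prod>i\<in>{1..m}. 1 - t ^ n * x i) = (\<Prod>i\<in>{1..m} - I. 1 - t ^ n * x i) * (\<Prod>i\<in>I. 1 - t ^ n * x i)"
      by (rule prod.subset_diff[OF I]) simp
    have p3: "(\<Prod>i\<in>I. (1 - x i) / (1 - t ^ n * x i)) * (\<Prod>i\<in>I. 1 - t ^ n * x i) = (\<Prod>i\<in>I. 1 - x i)"
    proof -
      have "(\<Prod>i\<in>I. (1 - x i) / (1 - t ^ n * x i)) * (\<Prod>i\<in>I. 1 - t ^ n * x i)
          = (\<Prod>i\<in>I. (1 - x i) / (1 - t ^ n * x i) * (1 - t ^ n * x i))"
        by (rule prod.distrib[symmetric])
      also have "\<dots> = (\<Prod>i\<in>I. 1 - x i)"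
        using I D by (intro prod.cong refl) auto
      finally show ?thesis .
    qed
    show "(- u) ^ card I * t ^ (card I choose 2) *
          (\<Prod>i\<in>I. \<Prod>j\<in>{1..m} - I. (t * x i - x j) / (x i - x j)) *
          (\<Prod>i\<in>I. \<Prod>j\<in>{1..n}. (1 - x i * t ^ (j - 1)) / (1 - t * x i * t ^ (j - 1))) *
          (\<Prod>i\<in>{1..m}. 1 - t ^ n * x i) = wt u (t ^ n) {1..m} I x t"
      unfolding p1 p2 wt_def Aw_def using p3 by (simp add: ac_simps)
  qed
qed

lemma sum_lt_choose: "(\<Sum>j<m. j) = m choose 2"
proof (induction m)
  case 0
  then show ?case by simp
next
  case (Suc m)
  then show ?case by (cases m) (auto simp: numeral_2_eq_2)
qed

lemma prod_rhs1:
  fixes t :: "'a::field"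
  assumes "m \<le> n"
  shows "(\<Prod>j<m. 1 - t ^ (n - m + 1) * t ^ j) = (\<Prod>i=1..m. 1 - t ^ (i + n - m))"
proof -
  have "(\<Prod>i=1..m. 1 - t ^ (i + n - m)) = (\<Prod>k<m. 1 - t ^ (Suc k + n - m))"
    using prod.atLeast1_atMost_eq[of "\<lambda>i. 1 - t ^ (i + n - m)" m] by simp
  also have "\<dots> = (\<Prod>j<m. 1 - t ^ (n - m + 1) * t ^ j)"
  proof (rule prod.cong[OF refl])
    fix k assume "k \<in> {..<m}"
    have "Suc k + n - m = (n - m + 1) + k" using assms by simp
    then show "1 - t ^ (Suc k + n - m) = 1 - t ^ (n - m + 1) * t ^ k" by (metis power_add)
  qed
  finally show ?thesis by simp
qed

lemma prod_rhs2:
  fixes t :: "'a::field"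
  assumes "m \<le> n"
  shows "(\<Prod>j<m. t ^ j - t ^ n) = t ^ (m choose 2) * (\<Prod>i=1..m. 1 - t ^ (i + n - m))"
proof -
  have "(\<Prod>j<m. t ^ j - t ^ n) = (\<Prod>j\<in>{0..<m}. t ^ j - t ^ n)" by (simp add: atLeast0LessThan)
  also have "\<dots> = (\<Prod>i\<in>{Suc 0..m}. t ^ (m + 0 - i) - t ^ n)"
    by (rule prod.atLeastLessThan_rev_at_least_Suc_atMost)
  also have "\<dots> = (\<Prod>i\<in>{Suc 0..m}. t ^ (m - i) * (1 - t ^ (i + n - m)))"
  proof (rule prod.cong[OF refl])
    fix i assume "i \<in> {Suc 0..m}"
    then have "(m - i) + (i + n - m) = n" using assms by simp
    then have "t ^ (m - i) * t ^ (i + n - m) = t ^ n" by (metis power_add)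
    then show "t ^ (m + 0 - i) - t ^ n = t ^ (m - i) * (1 - t ^ (i + n - m))"
      by (simp add: algebra_simps)
  qed
  also have "\<dots> = (\<Prod>i\<in>{Suc 0..m}. t ^ (m - i)) * (\<Prod>i\<in>{Suc 0..m}. 1 - t ^ (i + n - m))"
    by (rule prod.distrib)
  also have "(\<Prod>i\<in>{Suc 0..m}. t ^ (m - i)) = t ^ (m choose 2)"
  proof -
    have "(\<Sum>i\<in>{Suc 0..m}. m - i) = (\<Sum>j\<in>{0..<m}. j)"
      using sum.atLeastLessThan_rev_at_least_Suc_atMost[of "\<lambda>j. j" 0 m] by simp
    also have "\<dots> = m choose 2" using sum_lt_choose[of m] by (simp add: atLeast0LessThan)
    finally show ?thesis by (simp add: power_sum[symmetric])
  qed
  finally show ?thesis by simp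
qed

theorem corollary3p3:
  fixes x :: "nat \<Rightarrow> 'a::field" and t :: 'a and m n :: nat
  assumes "m \<le> n"
    and "\<forall>i\<in>{1..m}. \<forall>j\<in>{1..m}. i \<noteq> j \<longrightarrow> x i \<noteq> x j"
    and "\<forall>i\<in>{1..m}. \<forall>j\<in>{1..n}. 1 - t * x i * t ^ (j - 1) \<noteq> 0"
  shows "F (t ^ (n - m + 1)) m x n (\<lambda>j. t ^ (j - 1)) t
           = (\<Prod>i=1..m. (1 - t ^ (i + n - m)) / (1 - t ^ n * x i))
       \<and> F 1 m x n (\<lambda>j. t ^ (j - 1)) t
           = t ^ (m choose 2) * (\<Prod>i=1..m. x i)
             * (\<Prod>i=1..m. (1 - t ^ (i + n - m)) / (1 - t ^ n * x i))"
proof -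
  have inj: "inj_on x {1..m}" using assms(2) unfolding inj_on_def by blast
  have D: "\<forall>i\<in>{1..m}. 1 - t ^ n * x i \<noteq> 0"
  proof
    fix i assume i: "i \<in> {1..m}"
    then have "n \<in> {1..n}" using assms(1) by auto
    then have "1 - t * x i * t ^ (n - 1) \<noteq> 0" using assms(3) i by blast
    moreover have "t * x i * t ^ (n - 1) = t ^ n * x i"
      using \<open>n \<in> {1..n}\<close> by (cases n) (auto simp: ac_simps)
    ultimately show "1 - t ^ n * x i \<noteq> 0" by metis
  qed
  define Dp where "Dp = (\<Prod>i\<in>{1..m}. 1 - t ^ n * x i)"
  have Dnz: "Dp \<noteq> 0" unfolding Dp_def using D by simp
  have rhs: "(\<Prod>i=1..m. (1 - t ^ (i + n - m)) / (1 - t ^ n * x i)) = (\<Prod>i=1..m. 1 - t ^ (i + n - m)) / Dp"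
    unfolding Dp_def by (rule prod_dividef)
  have cS: "card {1..m} = m" by simp
  have L1: "LL (t ^ (n - m + 1)) (t ^ n) {1..m} x t = (\<Prod>i=1..m. 1 - t ^ (i + n - m))"
  proof -
    have pre: "card {1..m} = 0 \<or> t ^ n = t ^ (n - m + 1) * t ^ (card {1..m} - 1)"
    proof (cases m)
      case 0
      then show ?thesis by simp
    next
      case (Suc k)
      then have "n = (n - m + 1) + (card {1..m} - 1)" using assms(1) by simp
      then show ?thesis by (metis power_add)
    qed
    have "LL (t ^ (n - m + 1)) (t ^ n) {1..m} x t = (\<Prod>j<card {1..m}. 1 - t ^ (n - m + 1) * t ^ j)"
      by (rule claim1[OF finite_atLeastAtMost inj pre])
    then show ?thesis unfolding cS prod_rhs1[OF assms(1)] .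
  qed
  have L2: "LL 1 (t ^ n) {1..m} x t = (\<Prod>i=1..m. x i) * (t ^ (m choose 2) * (\<Prod>i=1..m. 1 - t ^ (i + n - m)))"
    using claim2[OF finite_atLeastAtMost inj, of "t ^ n" t] unfolding cS prod_rhs2[OF assms(1)] .
  have F1: "F (t ^ (n - m + 1)) m x n (\<lambda>j. t ^ (j - 1)) t * Dp = LL (t ^ (n - m + 1)) (t ^ n) {1..m} x t"
    unfolding Dp_def by (rule F_LL[OF D assms(3)])
  have F2: "F 1 m x n (\<lambda>j. t ^ (j - 1)) t * Dp = LL 1 (t ^ n) {1..m} x t"
    unfolding Dp_def by (rule F_LL[OF D assms(3)])
  show ?thesis
  proof
    show "F (t ^ (n - m + 1)) m x n (\<lambda>j. t ^ (j - 1)) t = (\<Prod>i=1..m. (1 - t ^ (i + n - m)) / (1 - t ^ n * x i))"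
      unfolding rhs using F1 L1 Dnz by (simp add: field_simps)
    show "F 1 m x n (\<lambda>j. t ^ (j - 1)) t = t ^ (m choose 2) * (\<Prod>i=1..m. x i) * (\<Prod>i=1..m. (1 - t ^ (i + n - m)) / (1 - t ^ n * x i))"
      unfolding rhs using F2 L2 Dnz by (simp add: field_simps)
  qed
qed

end
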